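(* For all $\lambda>0$ and all $0<x<\pi/2$, \[ \left|\int_0^x \frac{e^{it\lambda}}{\cos t}\,dt-\frac{i}{\lambda}\right|<\frac{1}{\lambda}-M(\lambda)+M(\lambda\cos x). \]
   Context: For $t>0$, $M(t)=\int_0^\infty \frac{e^{-tu}}{\sqrt{u^2+1}}\,du$. *)

theory Defs
  imports "HOL-Analysis.Analysis"
begin

definition M :: "real \<Rightarrow> real" where
  "M t = (LINT u:{0..}|lborel. exp (- t * u) / sqrt (u\<^sup>2 + 1))"

end

theory Submission
  imports Defs "HOL-Complex_Analysis.Complex_Analysis" "HOL-Real_Asymp.Real_Asymp"
begin

lemma sinh_ge_self: fixes s :: real assumes "0 \<le> s" shows "s \<le> sinh s"
  using real_le_x_sinh[OF assms] by (simp add: sinh_field_def exp_minus)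

lemma sinh_one_gt: "(1::real) < sinh 1"
proof -
  have "1 + 1 + 1^2/2 \<le> exp (1::real)" by (rule exp_lower_Taylor_quadratic) simp
  hence e: "5/2 \<le> exp (1::real)" by simp
  have "sinh (1::real) = (exp 1 - 1 / exp 1) / 2" by (simp add: sinh_field_def exp_minus')
  moreover have "exp 1 - 1/exp 1 > (2::real)"
  proof -
    have "exp (1::real) * (exp 1 - 2) \<ge> 5/2 * (1/2)" using e by (intro mult_mono) auto
    hence "exp (1::real) * exp 1 - 1 > 2 * exp 1" by (simp add: algebra_simps)
    thus ?thesis by (simp add: field_simps)
  qed
  ultimately show ?thesis by simp
qed

lemma norm_cos_sq: "(cmod (cos z))\<^sup>2 = (cos (Re z))\<^sup>2 + (sinh (Im z))\<^sup>2"
proof -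
  have r: "Re (cos z) = cos (Re z) * cosh (Im z)" by (simp add: Re_cos cosh_field_def)
  have i: "Im (cos z) = - (sin (Re z) * sinh (Im z))" by (simp add: Im_cos sinh_field_def field_simps)
  have "(cmod (cos z))\<^sup>2 = (cos (Re z) * cosh (Im z))\<^sup>2 + (sin (Re z) * sinh (Im z))\<^sup>2"
    by (simp add: cmod_power2 r i)
  also have "\<dots> = (cos (Re z))\<^sup>2 * (1 + (sinh (Im z))\<^sup>2) + (sin (Re z))\<^sup>2 * (sinh (Im z))\<^sup>2"
    by (simp add: power_mult_distrib cosh_square_eq)
  also have "\<dots> = (cos (Re z))\<^sup>2 + (sinh (Im z))\<^sup>2"
    using sin_cos_squared_add[of "Re z"] by algebra
  finally show ?thesis .
qed

lemma gmono:
  fixes C a b :: real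
  assumes C: "0 < C" "C < 1" and ab: "0 \<le> a" "a \<le> b"
  shows "1/sqrt(C+b\<^sup>2) - 1/sqrt(1+b\<^sup>2) \<le> 1/sqrt(C+a\<^sup>2) - 1/sqrt(1+a\<^sup>2)"
    and "a < b \<Longrightarrow> 1/sqrt(C+b\<^sup>2) - 1/sqrt(1+b\<^sup>2) < 1/sqrt(C+a\<^sup>2) - 1/sqrt(1+a\<^sup>2)"
proof -
  define AC where "AC = sqrt (C+a\<^sup>2)"
  define BC where "BC = sqrt (C+b\<^sup>2)"
  define A1 where "A1 = sqrt (1+a\<^sup>2)"
  define B1 where "B1 = sqrt (1+b\<^sup>2)"
  have pos: "AC > 0" "BC > 0" "A1 > 0" "B1 > 0" using C ab
    by (auto simp: AC_def BC_def A1_def B1_def add_pos_nonneg)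
  have lt: "AC < A1" "BC < B1" using C unfolding AC_def BC_def A1_def B1_def by auto
  have sqAC: "AC\<^sup>2 = C + a\<^sup>2" and sqBC: "BC\<^sup>2 = C+b\<^sup>2" and sqA1: "A1\<^sup>2 = 1+a\<^sup>2" and sqB1: "B1\<^sup>2 = 1+b\<^sup>2"
    using C by (auto simp: AC_def BC_def A1_def B1_def add_pos_nonneg)
  have "b\<^sup>2 - a\<^sup>2 = (BC - AC)*(BC+AC)" using sqAC sqBC by algebra
  hence "(b\<^sup>2 - a\<^sup>2) / (AC*BC*(AC+BC)) = (BC - AC) / (AC*BC)"
    using pos by (simp add: divide_simps)
  hence eC: "1/AC - 1/BC = (b\<^sup>2 - a\<^sup>2) / (AC*BC*(AC+BC))"
    using pos by (simp add: field_simps)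
  have "b\<^sup>2 - a\<^sup>2 = (B1 - A1)*(B1+A1)" using sqA1 sqB1 by algebra
  hence "(b\<^sup>2 - a\<^sup>2) / (A1*B1*(A1+B1)) = (B1 - A1) / (A1*B1)"
    using pos by (simp add: divide_simps)
  hence e1: "1/A1 - 1/B1 = (b\<^sup>2 - a\<^sup>2) / (A1*B1*(A1+B1))"
    using pos by (simp add: field_simps)
  have dlt: "AC*BC*(AC+BC) < A1*B1*(A1+B1)"
  proof -
    have "AC*BC < A1*B1" using pos lt by (simp add: mult_strict_mono)
    moreover have "AC+BC < A1+B1" using lt by simp
    ultimately show ?thesis using pos lt by (intro mult_strict_mono) auto
  qed
  have dpos: "0 < AC*BC*(AC+BC)" using pos by simp
  have nn: "0 \<le> b\<^sup>2 - a\<^sup>2" using ab by (simp add: power_mono)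
  have "(b\<^sup>2 - a\<^sup>2) / (A1*B1*(A1+B1)) \<le> (b\<^sup>2 - a\<^sup>2) / (AC*BC*(AC+BC))"
    using dlt dpos nn by (intro divide_left_mono) auto
  thus "1/sqrt(C+b\<^sup>2) - 1/sqrt(1+b\<^sup>2) \<le> 1/sqrt(C+a\<^sup>2) - 1/sqrt(1+a\<^sup>2)"
    using eC e1 unfolding AC_def BC_def A1_def B1_def by linarith
  assume "a < b"
  hence nn': "0 < b\<^sup>2 - a\<^sup>2" using ab by (simp add: power_strict_mono)
  have "(b\<^sup>2 - a\<^sup>2) / (A1*B1*(A1+B1)) < (b\<^sup>2 - a\<^sup>2) / (AC*BC*(AC+BC))"
    using dlt dpos nn' by (intro divide_strict_left_mono) auto
  thus "1/sqrt(C+b\<^sup>2) - 1/sqrt(1+b\<^sup>2) < 1/sqrt(C+a\<^sup>2) - 1/sqrt(1+a\<^sup>2)"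
    using eC e1 unfolding AC_def BC_def A1_def B1_def by linarith
qed


lemma quad_zero:
  fixes f :: "complex \<Rightarrow> complex"
  assumes hol: "f holomorphic_on S" and cvx: "convex S"
    and abcd: "a \<in> S" "b \<in> S" "c \<in> S" "d \<in> S"
  shows "contour_integral (linepath a b) f + contour_integral (linepath b c) f
         + contour_integral (linepath c d) f - contour_integral (linepath a d) f = 0"
proof -
  have cont: "continuous_on S f" using hol by (rule holomorphic_on_imp_continuous_on)
  have seg: "closed_segment p q \<subseteq> S" if "p \<in> S" "q \<in> S" for p q
    using closed_segment_subset[OF that cvx] .
  have ci: "f contour_integrable_on linepath p q" if "p \<in> S" "q \<in> S" for p q
    using contour_integrable_continuous_linepath continuous_on_subset[OF cont seg[OF that]] by blast
  define g where "g = linepath a b +++ (linepath b c +++ (linepath c d +++ linepath d a))"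
  have vg: "valid_path g" unfolding g_def by (auto intro!: valid_path_join)
  have pg: "path_image g \<subseteq> S" unfolding g_def
    using abcd by (simp add: path_image_join seg)
  have "(f has_contour_integral 0) g"
    by (rule Cauchy_theorem_convex_simple[OF hol cvx vg pg]) (simp add: g_def)
  hence "contour_integral g f = 0" by (rule contour_integral_unique)
  moreover have "contour_integral g f = contour_integral (linepath a b) f + (contour_integral (linepath b c) f
         + (contour_integral (linepath c d) f + contour_integral (linepath d a) f))"
    unfolding g_def using abcd ci
    by (simp add: contour_integrable_joinI valid_path_join)
  moreover have "contour_integral (linepath d a) f = - contour_integral (linepath a d) f"
    using contour_integral_reverse_linepath[OF continuous_on_subset[OF cont seg[OF abcd(4,1)]]] by simp
  ultimately show ?thesis by (simp add: algebra_simps)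
qed

lemma vert:
  fixes f :: "complex \<Rightarrow> complex" and R :: real
  assumes R: "0 < R" and cont: "continuous_on (closed_segment a (a + \<i> * of_real R)) f"
  shows "((\<lambda>s. f (a + \<i> * of_real s) * \<i>) has_integral
            contour_integral (linepath a (a + \<i> * of_real R)) f) {0..R}"
proof -
  define F where "F = (\<lambda>s::real. f (a + \<i> * of_real s) * \<i>)"
  have sub: "(\<lambda>s::real. a + \<i> * of_real s) ` {0..R} \<subseteq> closed_segment a (a + \<i> * of_real R)"
  proof
    fix z assume "z \<in> (\<lambda>s::real. a + \<i> * of_real s) ` {0..R}"
    then obtain s where s: "0 \<le> s" "s \<le> R" "z = a + \<i> * of_real s" by auto
    show "z \<in> closed_segment a (a + \<i> * of_real R)"
      using s R by (auto simp: in_segment scaleR_conv_of_real field_simps intro!: exI[of _ "s/R"])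
  qed
  have contF: "continuous_on {0..R} F" unfolding F_def
    by (intro continuous_intros continuous_on_compose2[OF cont _ sub])
  have "((\<lambda>t. R *\<^sub>R F (R * t)) has_integral integral {R*0..R*1} F) {0..1}"
    by (rule has_integral_substitution[where c=0 and d=R]) (use R contF in \<open>auto intro!: derivative_eq_intros simp: mult_le_cancel_left1\<close>)
  hence "((\<lambda>t. f (linepath a (a + \<i> * of_real R) t) * ((a + \<i> * of_real R) - a)) has_integral integral {0..R} F) {0..1}"
    by (rule has_integral_eq_rhs[OF has_integral_eq, rotated]) (auto simp: F_def linepath_def scaleR_conv_of_real algebra_simps)
  hence "(f has_contour_integral integral {0..R} F) (linepath a (a + \<i> * of_real R))"
    by (simp add: has_contour_integral_linepath)
  hence "contour_integral (linepath a (a + \<i> * of_real R)) f = integral {0..R} F"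
    by (rule contour_integral_unique)
  moreover have "(F has_integral integral {0..R} F) {0..R}"
    using contF integrable_continuous_interval by blast
  ultimately show ?thesis by (simp add: F_def)
qed


lemma M_integrable:
  fixes a :: real assumes a: "0 < a"
  shows "set_integrable lborel {0..} (\<lambda>u. exp (- a * u) / sqrt (u\<^sup>2 + 1))"
proof -
  have "(\<lambda>u. exp (- a * u)) integrable_on {0::real..}"
    using integrable_on_exp_minus_to_infinity[OF a] by simp
  hence "(\<lambda>u. exp (- a * u)) absolutely_integrable_on {0::real..}"
    by (rule nonnegative_absolutely_integrable_1) simp
  hence i1: "set_integrable lborel {0::real..} (\<lambda>u. exp (- a * u))"
    unfolding set_integrable_def
    by (subst (asm) integrable_completion) (auto simp: set_borel_measurable_def[symmetric] intro!: borel_measurable_continuous_onI continuous_intros)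
  show ?thesis
  proof (rule set_integrable_bound[OF i1])
    show "set_borel_measurable lborel {0..} (\<lambda>u. exp (- a * u) / sqrt (u\<^sup>2 + 1))"
      unfolding set_borel_measurable_def by measurable
    have "exp (- a * u) / sqrt (u\<^sup>2 + 1) \<le> exp (- a * u)" for u :: real
    proof -
      have "1 \<le> sqrt (u\<^sup>2 + 1)" by simp
      moreover have "0 < exp (- a * u)" by simp
      moreover have "\<not> u\<^sup>2 + 1 < 0" by (simp add: add_pos_nonneg not_less)
      ultimately show ?thesis by (simp add: divide_le_eq mult_le_cancel_left1)
    qed
    thus "AE x in lborel. x \<in> {0..} \<longrightarrow> norm (exp (- a * x) / sqrt (x\<^sup>2 + 1)) \<le> norm (exp (- a * x))"
      by simp
  qed
qed

lemma M_lim: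
  fixes a :: real assumes a: "0 < a"
  shows "((\<lambda>R. integral {0..R} (\<lambda>u. exp (- a * u) / sqrt (u\<^sup>2 + 1))) \<longlongrightarrow> M a) at_top"
proof -
  have int: "set_integrable lborel {0..} (\<lambda>u. exp (- a * u) / sqrt (u\<^sup>2 + 1))"
    by (rule M_integrable[OF a])
  have "((\<lambda>b. LINT u:{0..b}|lborel. exp (- a * u) / sqrt (u\<^sup>2 + 1)) \<longlongrightarrow> M a) at_top"
    unfolding M_def by (rule tendsto_set_lebesgue_integral_at_top[OF _ int]) simp
  moreover have "(LINT u:{0..b}|lborel. exp (- a * u) / sqrt (u\<^sup>2 + 1)) = integral {0..b} (\<lambda>u. exp (- a * u) / sqrt (u\<^sup>2 + 1))" for b
    by (rule set_borel_integral_eq_integral(2)[OF set_integrable_subset[OF int]]) auto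
  ultimately show ?thesis by simp
qed


lemma cos_i_real: "cos (0 + \<i> * complex_of_real s) = complex_of_real (cosh s)"
  using cosh_real[of s] by (simp add: cosh_field_def exp_minus)

lemma cosh_sqrt: "cosh (s::real) = sqrt (1 + (sinh s)\<^sup>2)"
proof -
  have "sqrt ((cosh s)\<^sup>2) = cosh s" by simp
  thus ?thesis by (simp add: cosh_square_eq add.commute)
qed

lemma kbound:
  fixes lam x s :: real
  assumes cx: "0 < cos x" and s: "0 \<le> s"
  shows "cmod (exp (\<i> * of_real lam * (0 + \<i> * of_real s)) / cos (0 + \<i> * of_real s) * \<i>
           - exp (\<i> * of_real lam * (of_real x + \<i> * of_real s)) / cos (of_real x + \<i> * of_real s) * \<i>
           - \<i> * of_real (exp (- lam * s)))
         \<le> exp (- lam * s) * (1 - 1 / sqrt (1 + (sinh s)\<^sup>2) + 1 / sqrt ((cos x)\<^sup>2 + (sinh s)\<^sup>2))"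
proof -
  have e0: "exp (\<i> * of_real lam * (0 + \<i> * of_real s)) = of_real (exp (- lam * s))"
  proof -
    have h: "\<i> * of_real lam * (0 + \<i> * of_real s) = (of_real (- lam * s) :: complex)"
      by (simp add: algebra_simps)
    show ?thesis by (subst h) (rule exp_of_real)
  qed
  have ch: "cosh s \<ge> 1" by (rule cosh_real_ge_1)
  have A: "exp (\<i> * of_real lam * (0 + \<i> * of_real s)) / cos (0 + \<i> * of_real s) * \<i>
           - \<i> * of_real (exp (- lam * s)) = \<i> * of_real (exp (- lam * s) * (1 / cosh s - 1))"
    by (simp only: e0 cos_i_real) (simp add: field_simps)
  have nA: "cmod (\<i> * of_real (exp (- lam * s) * (1 / cosh s - 1))) = exp (- lam * s) * (1 - 1 / sqrt (1 + (sinh s)\<^sup>2))"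
  proof -
    have "1 / cosh s \<le> 1" using ch by simp
    hence "\<bar>exp (- lam * s) * (1 / cosh s - 1)\<bar> = exp (- lam * s) * (1 - 1 / cosh s)"
      by (simp add: abs_mult)
    moreover have "cmod (\<i> * complex_of_real r) = \<bar>r\<bar>" for r by (simp add: norm_mult)
    ultimately show ?thesis by (simp only: cosh_sqrt)
  qed
  have ncos: "cmod (cos (of_real x + \<i> * of_real s)) = sqrt ((cos x)\<^sup>2 + (sinh s)\<^sup>2)"
  proof -
    have "(cmod (cos (of_real x + \<i> * of_real s)))\<^sup>2 = (cos x)\<^sup>2 + (sinh s)\<^sup>2"
      using norm_cos_sq[of "of_real x + \<i> * of_real s"] by simp
    thus ?thesis by (metis norm_ge_zero real_sqrt_unique)
  qed
  have nB: "cmod (exp (\<i> * of_real lam * (of_real x + \<i> * of_real s)) / cos (of_real x + \<i> * of_real s) * \<i>)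
      = exp (- lam * s) / sqrt ((cos x)\<^sup>2 + (sinh s)\<^sup>2)"
    by (simp add: norm_mult norm_divide ncos)
  have "exp (\<i> * of_real lam * (0 + \<i> * of_real s)) / cos (0 + \<i> * of_real s) * \<i>
           - exp (\<i> * of_real lam * (of_real x + \<i> * of_real s)) / cos (of_real x + \<i> * of_real s) * \<i>
           - \<i> * of_real (exp (- lam * s))
      = \<i> * of_real (exp (- lam * s) * (1 / cosh s - 1))
        - exp (\<i> * of_real lam * (of_real x + \<i> * of_real s)) / cos (of_real x + \<i> * of_real s) * \<i>"
    using A by (simp add: algebra_simps)
  hence "cmod (exp (\<i> * of_real lam * (0 + \<i> * of_real s)) / cos (0 + \<i> * of_real s) * \<i>
           - exp (\<i> * of_real lam * (of_real x + \<i> * of_real s)) / cos (of_real x + \<i> * of_real s) * \<i>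
           - \<i> * of_real (exp (- lam * s))) \<le> exp (- lam * s) * (1 - 1 / sqrt (1 + (sinh s)\<^sup>2))
          + exp (- lam * s) / sqrt ((cos x)\<^sup>2 + (sinh s)\<^sup>2)"
    using norm_triangle_ineq4[of "\<i> * of_real (exp (- lam * s) * (1 / cosh s - 1))"
        "exp (\<i> * of_real lam * (of_real x + \<i> * of_real s)) / cos (of_real x + \<i> * of_real s) * \<i>"]
    by (simp only: nA nB)
  thus ?thesis by (simp add: algebra_simps)
qed

lemma top_bound:
  fixes lam x R :: real
  assumes lam: "0 < lam" and R: "1 \<le> R" and x: "0 < x"
    and ci: "(\<lambda>z. exp (\<i> * of_real lam * z) / cos z) contour_integrable_on
              linepath (of_real x + \<i> * of_real R) (0 + \<i> * of_real R)"
  shows "cmod (contour_integral (linepath (of_real x + \<i> * of_real R) (0 + \<i> * of_real R))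
                 (\<lambda>z. exp (\<i> * of_real lam * z) / cos z)) \<le> exp (- lam * R) * x"
proof -
  have "cmod (contour_integral (linepath (of_real x + \<i> * of_real R) (0 + \<i> * of_real R))
                 (\<lambda>z. exp (\<i> * of_real lam * z) / cos z))
        \<le> exp (- lam * R) * cmod ((0 + \<i> * of_real R) - (of_real x + \<i> * of_real R))"
  proof (rule has_contour_integral_bound_linepath[OF has_contour_integral_integral[OF ci]])
    show "0 \<le> exp (- lam * R)" by simp
    fix z assume z: "z \<in> closed_segment (of_real x + \<i> * of_real R) (0 + \<i> * of_real R)"
    from z obtain u where "z = (1 - u) *\<^sub>R (of_real x + \<i> * of_real R) + u *\<^sub>R (0 + \<i> * of_real R)"
      by (auto simp: in_segment)
    hence "Im z = (1 - u) * R + u * R" by simp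
    hence imz: "Im z = R" by (simp add: algebra_simps)
    have "(sinh R)\<^sup>2 \<le> (cmod (cos z))\<^sup>2" using norm_cos_sq[of z] imz by simp
    hence "sinh R \<le> cmod (cos z)"
      by (rule power2_le_imp_le[OF _ norm_ge_zero])
    moreover have "1 \<le> sinh R" using sinh_ge_self[of R] R by simp
    ultimately have cz: "1 \<le> cmod (cos z)" by simp
    have "cmod (exp (\<i> * of_real lam * z)) = exp (- lam * R)" using imz by simp
    moreover have "exp (- lam * R) * 1 \<le> exp (- lam * R) * cmod (cos z)"
      using cz by (intro mult_left_mono) auto
    moreover have "cmod (cos z) > 0" using cz by linarith
    ultimately show "cmod (exp (\<i> * of_real lam * z) / cos z) \<le> exp (- lam * R)"
      using imz by (simp add: norm_divide divide_le_eq)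
  qed
  also have "cmod ((0 + \<i> * of_real R) - (of_real x + \<i> * of_real R)) = x" using x by simp
  finally show ?thesis .
qed


theorem theorem5:
  fixes lam x :: real
  assumes "lam > 0" and "0 < x" and "x < pi / 2"
  shows "cmod (integral {0..x} (\<lambda>t. exp (\<i> * complex_of_real (t * lam)) / complex_of_real (cos t))
               - \<i> / complex_of_real lam)
         < 1 / lam - M lam + M (lam * cos x)"
proof -
  note lam = assms(1) and x0 = assms(2) and x1 = assms(3)
  define c where "c = cos x"
  have c0: "0 < c" unfolding c_def using assms by (intro cos_gt_zero_pi) auto
  have c1: "c < 1" unfolding c_def using cos_monotone_0_pi[of 0 x] assms pi_gt_zero by simp
  define f where "f = (\<lambda>z::complex. exp (\<i> * of_real lam * z) / cos z)"
  define S where "S = {z::complex. Re z < pi/2} \<inter> {z. - (pi/2) < Re z}"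
  have cosnz: "cos z \<noteq> 0" if "z \<in> S" for z
  proof -
    have "0 < cos (Re z)" using that by (intro cos_gt_zero_pi) (auto simp: S_def)
    hence "0 < (cmod (cos z))\<^sup>2" using norm_cos_sq[of z]
      by (metis add_pos_nonneg zero_le_power2 zero_less_power2 less_irrefl)
    thus ?thesis by auto
  qed
  have hol: "f holomorphic_on S" unfolding f_def by (intro holomorphic_intros) (use cosnz in auto)
  have cvx: "convex S" unfolding S_def by (intro convex_Int convex_halfspace_Re_lt convex_halfspace_Re_gt)
  have contS: "continuous_on S f" by (rule holomorphic_on_imp_continuous_on[OF hol])
  have inS: "z \<in> S" if "Re z = 0 \<or> Re z = x" for z using that assms pi_gt_zero by (auto simp: S_def)
  have segS: "closed_segment p q \<subseteq> S" if "p \<in> S" "q \<in> S" for p q using closed_segment_subset[OF that cvx] .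
  have contseg: "continuous_on (closed_segment p q) f" if "p \<in> S" "q \<in> S" for p q
    using continuous_on_subset[OF contS segS[OF that]] .

  define I where "I = integral {0..x} (\<lambda>t. exp (\<i> * complex_of_real (t * lam)) / complex_of_real (cos t))"
  have I_eq: "contour_integral (linepath 0 (of_real x)) f = I"
  proof -
    have "contour_integral (linepath 0 (of_real x)) f = integral {Re 0..Re (of_real x)} (\<lambda>t. f (of_real t))"
      by (rule contour_integral_linepath_Reals_eq) (use assms in auto)
    also have "\<dots> = I" unfolding I_def f_def by (simp add: cos_of_real mult_ac)
    finally show ?thesis .
  qed

  define E where "E = (\<lambda>R. (1 - exp (- lam * R)) / lam)"
  have Eint: "((\<lambda>s. exp (- lam * s)) has_integral E R) {0..R}" if "0 \<le> R" for R
  proof -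
    have "((\<lambda>s. exp (- lam * s)) has_integral ((- exp (- lam * R) / lam) - (- exp (- lam * 0) / lam))) {0..R}"
      by (rule fundamental_theorem_of_calculus[OF that])
         (use lam in \<open>auto intro!: derivative_eq_intros simp: has_real_derivative_iff_has_vector_derivative[symmetric]\<close>)
    thus ?thesis using lam by (simp add: E_def field_simps)
  qed

  have nz: "1 + y\<^sup>2 \<noteq> 0" "y\<^sup>2 + 1 \<noteq> 0" "c\<^sup>2 + y\<^sup>2 \<noteq> 0" for y :: real
  proof -
    have "0 < 1 + y\<^sup>2" "0 < y\<^sup>2 + 1" "0 < c\<^sup>2 + y\<^sup>2"
      using c0 by (auto intro: add_pos_nonneg add_nonneg_pos)
    thus "1 + y\<^sup>2 \<noteq> 0" "y\<^sup>2 + 1 \<noteq> 0" "c\<^sup>2 + y\<^sup>2 \<noteq> 0" by auto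
  qed
  define P where "P = (\<lambda>s::real. exp (- lam * s) / sqrt (s\<^sup>2 + 1))"
  define Q where "Q = (\<lambda>u::real. exp (- (lam * cos x) * u) / sqrt (u\<^sup>2 + 1))"
  define Fc where "Fc = (\<lambda>s::real. exp (- lam * s) / sqrt (c\<^sup>2 + s\<^sup>2))"
  define sg where "sg = (\<lambda>s::real. exp (- lam * s) * (1 - 1 / sqrt (1 + (sinh s)\<^sup>2) + 1 / sqrt (c\<^sup>2 + (sinh s)\<^sup>2)))"
  define tau where "tau = (\<lambda>s::real. exp (- lam * s) - P s + Fc s)"
  define dl where "dl = (\<lambda>s::real. tau s - sg s)"
  have contP: "continuous_on A P" for A unfolding P_def by (intro continuous_intros) (use c0 in \<open>auto simp: nz\<close>)
  have contQ: "continuous_on A Q" for A unfolding Q_def by (intro continuous_intros) (use c0 in \<open>auto simp: nz\<close>)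
  have contFc: "continuous_on A Fc" for A unfolding Fc_def by (intro continuous_intros) (use c0 in \<open>auto simp: nz\<close>)
  have contsg: "continuous_on A sg" for A unfolding sg_def by (intro continuous_intros) (use c0 in \<open>auto simp: nz\<close>)
  have conttau: "continuous_on A tau" for A unfolding tau_def by (intro continuous_intros contP contFc)
  have contdl: "continuous_on A dl" for A unfolding dl_def by (intro continuous_intros conttau contsg)
  have dl_eq: "dl s = exp (- lam * s) * ((1 / sqrt (c\<^sup>2 + s\<^sup>2) - 1 / sqrt (1 + s\<^sup>2))
                 - (1 / sqrt (c\<^sup>2 + (sinh s)\<^sup>2) - 1 / sqrt (1 + (sinh s)\<^sup>2)))" for s
    unfolding dl_def tau_def sg_def P_def Fc_def by (simp add: algebra_simps)
  have cc: "0 < c\<^sup>2" "c\<^sup>2 < 1" using c0 c1 by (auto simp: power_less_one_iff)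
  have dl_nn: "0 \<le> dl s" if "0 \<le> s" for s
  proof -
    have "1 / sqrt (c\<^sup>2 + (sinh s)\<^sup>2) - 1 / sqrt (1 + (sinh s)\<^sup>2) \<le> 1 / sqrt (c\<^sup>2 + s\<^sup>2) - 1 / sqrt (1 + s\<^sup>2)"
      by (rule gmono(1)[OF cc that sinh_ge_self[OF that]])
    thus ?thesis unfolding dl_eq by simp
  qed
  have dl1: "0 < dl 1"
  proof -
    have "1 / sqrt (c\<^sup>2 + (sinh 1)\<^sup>2) - 1 / sqrt (1 + (sinh 1)\<^sup>2) < 1 / sqrt (c\<^sup>2 + 1\<^sup>2) - 1 / sqrt (1 + 1\<^sup>2)"
      by (rule gmono(2)[OF cc _ _ sinh_one_gt]) (use sinh_one_gt in auto)
    thus ?thesis unfolding dl_eq by simp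
  qed
  define D where "D = integral {0..1} dl"
  have Dpos: "0 < D"
  proof -
    have int: "dl integrable_on {0..1}" by (rule integrable_continuous_interval[OF contdl])
    have ge: "0 \<le> D" unfolding D_def by (rule integral_nonneg[OF int]) (auto intro: dl_nn)
    have "D \<noteq> 0"
    proof
      assume "D = 0"
      hence h0: "(dl has_integral 0) (cbox 0 1)" using int unfolding D_def
        by (metis cbox_interval has_integral_integral)
      have "dl 1 = 0"
        by (rule has_integral_0_cbox_imp_0[OF contdl _ h0]) (auto simp: box_real intro: dl_nn)
      with dl1 show False by simp
    qed
    with ge show ?thesis by simp
  qed

  have key: "cmod (I - \<i> / of_real lam) \<le> E R - integral {0..R} P + integral {0..R/c} Q - D
              + exp (- lam * R) * x + exp (- lam * R) / lam" if R: "1 \<le> R" for R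
  proof -
    have R0: "0 < R" using R by simp
    define V0 where "V0 = contour_integral (linepath 0 (0 + \<i> * of_real R)) f"
    define Vx where "Vx = contour_integral (linepath (of_real x) (of_real x + \<i> * of_real R)) f"
    define T where "T = contour_integral (linepath (of_real x + \<i> * of_real R) (0 + \<i> * of_real R)) f"
    have pts: "0 \<in> S" "of_real x \<in> S" "of_real x + \<i> * of_real R \<in> S" "0 + \<i> * of_real R \<in> S"
      by (auto intro!: inS)
    have quad: "I + Vx + T - V0 = 0"
      unfolding V0_def Vx_def T_def I_eq[symmetric] by (rule quad_zero[OF hol cvx pts])
    have hV0: "((\<lambda>s. f (0 + \<i> * of_real s) * \<i>) has_integral V0) {0..R}"
      unfolding V0_def by (rule vert[OF R0 contseg]) (use pts in auto)
    have hVx: "((\<lambda>s. f (of_real x + \<i> * of_real s) * \<i>) has_integral Vx) {0..R}"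
      unfolding Vx_def by (rule vert[OF R0 contseg]) (use pts in auto)
    have hE: "((\<lambda>s. \<i> * of_real (exp (- lam * s))) has_integral \<i> * of_real (E R)) {0..R}"
      by (rule has_integral_mult_right[OF has_integral_of_real[OF Eint]]) (use R0 in simp)
    define k where "k = (\<lambda>s. f (0 + \<i> * of_real s) * \<i> - f (of_real x + \<i> * of_real s) * \<i> - \<i> * of_real (exp (- lam * s)))"
    have hk: "(k has_integral (V0 - Vx - \<i> * of_real (E R))) {0..R}"
      unfolding k_def by (intro has_integral_diff hV0 hVx hE)
    have sg_int: "sg integrable_on {0..R}" by (rule integrable_continuous_interval[OF contsg])
    have tau_int: "tau integrable_on {0..R}" by (rule integrable_continuous_interval[OF conttau])
    have dl_int: "dl integrable_on {0..R}" by (rule integrable_continuous_interval[OF contdl])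
    have "cmod (integral {0..R} k) \<le> integral {0..R} sg"
    proof (rule integral_norm_bound_integral)
      show "k integrable_on {0..R}" using hk by blast
      show "sg integrable_on {0..R}" by (rule sg_int)
      fix s assume "s \<in> {0..R}"
      hence "0 \<le> s" by simp
      from kbound[OF c0[unfolded c_def] this, of lam]
      show "cmod (k s) \<le> sg s" unfolding k_def f_def sg_def c_def .
    qed
    hence nk: "cmod (V0 - Vx - \<i> * of_real (E R)) \<le> integral {0..R} sg" using integral_unique[OF hk] by simp
    have sg_eq: "integral {0..R} sg = integral {0..R} tau - integral {0..R} dl"
    proof -
      have "integral {0..R} dl = integral {0..R} tau - integral {0..R} sg"
        unfolding dl_def by (rule integral_diff[OF tau_int sg_int])
      thus ?thesis by simp
    qed
    have dlD: "D \<le> integral {0..R} dl"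
    proof -
      have "integral {0..1} dl + integral {1..R} dl = integral {0..R} dl"
        by (rule Henstock_Kurzweil_Integration.integral_combine[OF _ R dl_int]) simp
      moreover have "0 \<le> integral {1..R} dl"
        by (rule integral_nonneg[OF integrable_continuous_interval[OF contdl]]) (auto intro: dl_nn)
      ultimately show ?thesis unfolding D_def by simp
    qed
    have hP: "(P has_integral integral {0..R} P) {0..R}"
      using integrable_continuous_interval[OF contP] by (rule integrable_integral)
    have hFc: "(Fc has_integral integral {0..R} Fc) {0..R}"
      using integrable_continuous_interval[OF contFc] by (rule integrable_integral)
    have "(tau has_integral (E R - integral {0..R} P + integral {0..R} Fc)) {0..R}"
      unfolding tau_def by (intro has_integral_add has_integral_diff Eint hP hFc) (use R0 in simp)
    hence tau_eq: "integral {0..R} tau = E R - integral {0..R} P + integral {0..R} Fc"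
      by (rule integral_unique)
    have Fc_eq: "integral {0..R} Fc = integral {0..R/c} Q"
    proof -
      have "((\<lambda>u. c *\<^sub>R Fc (c * u)) has_integral integral {c*0..c*(R/c)} Fc) {0..R/c}"
        by (rule has_integral_substitution[where c=0 and d=R])
           (use c0 R0 contFc in \<open>auto intro!: derivative_eq_intros simp: field_simps\<close>)
      moreover have "c *\<^sub>R Fc (c * u) = Q u" for u
      proof -
        have "sqrt (c\<^sup>2 + (c * u)\<^sup>2) = c * sqrt (u\<^sup>2 + 1)"
        proof -
          have "c\<^sup>2 + (c * u)\<^sup>2 = c\<^sup>2 * (u\<^sup>2 + 1)" by (simp add: algebra_simps power_mult_distrib)
          thus ?thesis using c0 by (simp add: real_sqrt_mult)
        qed
        thus ?thesis unfolding Fc_def Q_def c_def[symmetric] using c0 by (simp add: field_simps nz)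
      qed
      ultimately have "(Q has_integral integral {0..R} Fc) {0..R/c}" using c0 by simp
      thus ?thesis by (simp add: integral_unique)
    qed
    have nT: "cmod T \<le> exp (- lam * R) * x"
      unfolding T_def f_def
      by (rule top_bound[OF lam R x0], rule contour_integrable_continuous_linepath, fold f_def, rule contseg)
         (use pts in auto)
    have sumE: "E R + exp (- lam * R) / lam = 1 / lam" using lam by (simp add: E_def field_simps)
    have "\<i> / of_real lam = \<i> * of_real (1 / lam)" by (simp add: divide_inverse)
    also have "\<dots> = \<i> * of_real (E R) + \<i> * of_real (exp (- lam * R) / lam)"
      by (simp only: sumE[symmetric] of_real_add distrib_left)
    finally have idec: "\<i> / of_real lam = \<i> * of_real (E R) + \<i> * of_real (exp (- lam * R) / lam)" .
    have decomp: "I - \<i> / of_real lam = (V0 - Vx - \<i> * of_real (E R)) - T - \<i> * of_real (exp (- lam * R) / lam)"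
    proof -
      have "I = V0 - Vx - T" using quad by (simp add: algebra_simps)
      thus ?thesis by (simp add: idec algebra_simps)
    qed
    have nB: "cmod (\<i> * of_real (exp (- lam * R) / lam)) = exp (- lam * R) / lam"
      using lam by (simp add: norm_mult norm_divide)
    have "cmod (I - \<i> / of_real lam) \<le> cmod (V0 - Vx - \<i> * of_real (E R)) + cmod T + cmod (\<i> * of_real (exp (- lam * R) / lam))"
      unfolding decomp by (metis (no_types, lifting) add_mono norm_triangle_ineq4 order_trans order_refl)
    also have "\<dots> \<le> integral {0..R} sg + exp (- lam * R) * x + exp (- lam * R) / lam"
      using nk nT nB by simp
    also have "\<dots> \<le> E R - integral {0..R} P + integral {0..R/c} Q - D + exp (- lam * R) * x + exp (- lam * R) / lam"
      using sg_eq tau_eq Fc_eq dlD by simp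
    finally show ?thesis .
  qed

  have e0: "((\<lambda>R. exp (- lam * R)) \<longlongrightarrow> 0) at_top" using lam by real_asymp
  have filt: "filterlim (\<lambda>R. R / c) at_top at_top" using c0 by real_asymp
  have lP: "((\<lambda>R. integral {0..R} P) \<longlongrightarrow> M lam) at_top"
    unfolding P_def by (rule M_lim[OF lam])
  have lQ: "((\<lambda>R. integral {0..R/c} Q) \<longlongrightarrow> M (lam * cos x)) at_top"
    unfolding Q_def
    by (rule filterlim_compose[OF M_lim filt]) (use lam c0 c_def in simp)
  have lim: "((\<lambda>R. E R - integral {0..R} P + integral {0..R/c} Q - D + exp (- lam * R) * x + exp (- lam * R) / lam)
              \<longlongrightarrow> (1 - 0) / lam - M lam + M (lam * cos x) - D + 0 * x + 0 / lam) at_top"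
    unfolding E_def by (intro tendsto_intros e0 lP lQ) (use lam in auto)
  have "cmod (I - \<i> / of_real lam) \<le> (1 - 0) / lam - M lam + M (lam * cos x) - D + 0 * x + 0 / lam"
    by (rule tendsto_lowerbound[OF lim]) (unfold eventually_at_top_linorder, intro exI[of _ 1] allI impI key, auto)
  thus ?thesis using Dpos unfolding I_def by simp
qed

end
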